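(* Let $W:\mathbb{T}\to(-\infty,\infty]$ satisfy (H1)–(H4) and let $\alpha>0$. Let $\rho$ be a Borel probability measure on $\mathbb{T}$. (i) There exists a closed arc $I$ with $\mathcal{D}[\rho]=\rho(I)-|I|$. (ii) If $\rho_n\rightharpoonup\rho$ weakly in the set of probability measures, then $\mathcal{D}[\rho]=\lim_{n\to\infty}\mathcal{D}[\rho_n]$. (iii) If $\rho_n\rightharpoonup\rho$, then $\mathcal{H}[\rho]\le\liminf_{n\to\infty}\mathcal{H}[\rho_n]$. (iv) If $\rho_n\rightharpoonup\rho$, then $\mathcal{G}_\alpha[\rho]\le\liminf_{n\to\infty}\mathcal{G}_\alpha[\rho_n]$.
   Context: $\mathbb{T}=\mathbb{R}/\mathbb{Z}$ with Lebesgue measure $|\cdot|$. Hypotheses on $W$: (H1) $W\in L^1(\mathbb{T})\cap C^2(\mathbb{T}\setminus\{0\})$ and $\int_{\mathbb{T}}W=0$; (H2) $W(x)=W(-x)$; (H3) $\lim_{x\to0}W(x)=W(0)=\infty$; (H4) there is $C_1>0$ with $W''(x)\ge C_1$ on $\mathbb{T}\setminus\{0\}$. For a probability measure $\rho$: $(W*\rho)(x)=\int W(x-y)\,d\rho(y)$, $\mathcal{H}[\rho]=-\operatorname{ess\,inf}_{\mathbb{T}}(W*\rho)$ (w.r.t. Lebesgue measure), $\mathcal{D}[\rho]=\sup_I(\rho(I)-|I|)$ over closed arcs $I$, and $\mathcal{G}_\alpha[\rho]=\mathcal{H}[\rho]/\mathcal{D}[\rho]^\alpha$. Weak convergence $\rho_n\rightharpoonup\rho$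 means $\int f\,d\rho_n\to\int f\,d\rho$ for all $f\in C(\mathbb{T})$. *)

theory Defs
  imports "HOL-Probability.Probability"
begin

text \<open>The torus T = R/Z is modelled by the fundamental domain [0,1).
  A Borel probability measure on T is a probability measure on the Borel sets of [0,1).\<close>

definition torus_prob :: "real measure \<Rightarrow> bool" where
  "torus_prob \<rho> \<longleftrightarrow> prob_space \<rho> \<and> sets \<rho> = sets (restrict_space borel {0..<1::real})"

definition arc :: "real \<Rightarrow> real \<Rightarrow> real set" where
  "arc a l = frac ` {a..a+l}"

definition discr :: "real measure \<Rightarrow> real" where
  "discr \<rho> = Sup {measure \<rho> (arc a l) - l | a l. 0 \<le> l \<and> l \<le> 1}"

text \<open>Weak convergence: integrals of all continuous functions on T (= continuous 1-periodic
  functions on R) converge.\<close>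
definition weak_conv :: "(nat \<Rightarrow> real measure) \<Rightarrow> real measure \<Rightarrow> bool" where
  "weak_conv \<rho>s \<rho> \<longleftrightarrow>
     (\<forall>f::real \<Rightarrow> real. continuous_on UNIV f \<and> (\<forall>x. f (x + 1) = f x) \<longrightarrow>
        (\<lambda>n. \<integral>x. f x \<partial>(\<rho>s n)) \<longlonglongrightarrow> (\<integral>x. f x \<partial>\<rho>))"

definition conv :: "(real \<Rightarrow> ereal) \<Rightarrow> real measure \<Rightarrow> real \<Rightarrow> ereal" where
  "conv W \<rho> x =
     enn2ereal (\<integral>\<^sup>+ y. e2ennreal (W (x - y)) \<partial>\<rho>)
     - enn2ereal (\<integral>\<^sup>+ y. e2ennreal (- W (x - y)) \<partial>\<rho>)"

definition essinf :: "'a measure \<Rightarrow> ('a \<Rightarrow> ereal) \<Rightarrow> ereal" where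
  "essinf M f = Sup {z. AE x in M. z \<le> f x}"

definition Hfun :: "(real \<Rightarrow> ereal) \<Rightarrow> real measure \<Rightarrow> ereal" where
  "Hfun W \<rho> = - essinf (lebesgue_on {0..<1}) (conv W \<rho>)"

definition Gfun :: "(real \<Rightarrow> ereal) \<Rightarrow> real \<Rightarrow> real measure \<Rightarrow> ereal" where
  "Gfun W \<alpha> \<rho> = Hfun W \<rho> / ereal (discr \<rho> powr \<alpha>)"

end

theory Submission
  imports Defs
begin

definition cd :: "real \<Rightarrow> real" where
  "cd s = arccos (cos (2*pi* s)) / (2*pi)"

lemma cd_eq: "cd s = \<bar>s - of_int (round s)\<bar>"
proof -
  define k where "k = round s"
  define u where "u = \<bar>s - of_int k\<bar>"
  have u: "0 \<le> u" "u \<le> 1/2" using of_int_round_abs_le[of s] abs_minus_commute[of s "of_int (round s)"] by (auto simp: u_def k_def)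
  have "cos (2*pi* s) = cos (2*pi* (s - of_int k))"
    by (simp add: right_diff_distrib cos_diff)
  also have "\<dots> = cos (2*pi* u)"
  proof (cases "s - of_int k \<ge> 0")
    case False
    have "2*pi*(of_int k - s) = -(2*pi*(s - of_int k))" by algebra
    then have "cos (2*pi*(of_int k - s)) = cos (2*pi*(s - of_int k))" by (metis cos_minus)
    with False show ?thesis by (simp add: u_def)
  qed (simp add: u_def)
  finally have "arccos (cos (2*pi* s)) = 2*pi* u"
    using u by (simp add: arccos_cos)
  then show ?thesis by (simp add: cd_def u_def k_def)
qed

lemma cd_cont: "continuous_on UNIV cd"
  unfolding cd_def
  by (intro continuous_intros continuous_on_compose2[OF continuous_on_arccos']) auto

lemma cd_int_le: "cd s \<le> \<bar>s - of_int m\<bar>"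
  using round_diff_minimal[of s m] by (simp add: cd_eq)

lemma cd_nonneg: "0 \<le> cd s" by (simp add: cd_eq)
lemma cd_le_half: "cd s \<le> 1/2" using of_int_round_abs_le[of s] abs_minus_commute[of s "of_int (round s)"] by (simp add: cd_eq)

lemma cd_le_abs: "cd s \<le> \<bar>s\<bar>" using cd_int_le[of s 0] by simp

lemma cd_triangle: "cd (x + y) \<le> cd x + cd y"
proof -
  have "cd (x+y) \<le> \<bar>x + y - of_int (round x + round y)\<bar>" by (rule cd_int_le)
  also have "\<dots> \<le> cd x + cd y" by (simp add: cd_eq abs_triangle_ineq[THEN order_trans[rotated]] algebra_simps)
  finally show ?thesis .
qed

lemma cd_shift_int: "cd (s + of_int k) = cd s"
  unfolding cd_def by (simp add: distrib_left cos_add mult.assoc[symmetric])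

lemma cd_shift1: "cd (s + 1) = cd s"
  using cd_shift_int[of s 1] by simp

lemma cd_minus: "cd (- s) = cd s" unfolding cd_def by simp

definition Sarc :: "real \<Rightarrow> real \<Rightarrow> real set" where
  "Sarc c h = {t. 0 \<le> t \<and> t < 1 \<and> cd (t - c) \<le> h}"

lemma arc_eq:
  assumes "0 \<le> l"
  shows "arc a l = Sarc (a + l/2) (l/2)"
proof
  show "arc a l \<subseteq> Sarc (a + l/2) (l/2)"
  proof
    fix t assume "t \<in> arc a l"
    then obtain s where s: "a \<le> s" "s \<le> a + l" "t = frac s" by (auto simp: arc_def)
    have "t - (a + l/2) = (s - (a + l/2)) + of_int (- \<lfloor>s\<rfloor>)"
      using s by (simp add: frac_def)
    then have "cd (t - (a + l/2)) = cd (s - (a + l/2))" by (metis cd_shift_int)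
    also have "\<dots> \<le> \<bar>s - (a + l/2)\<bar>" by (rule cd_le_abs)
    also have "\<dots> \<le> l/2" using s(1,2) by arith
    finally show "t \<in> Sarc (a + l/2) (l/2)" using s frac_lt_1[of s] by (simp add: Sarc_def)
  qed
  show "Sarc (a + l/2) (l/2) \<subseteq> arc a l"
  proof
    fix t assume t: "t \<in> Sarc (a + l/2) (l/2)"
    define m where "m = round (t - (a + l/2))"
    have "\<bar>t - (a + l/2) - of_int m\<bar> \<le> l/2" using t by (simp add: Sarc_def cd_eq m_def)
    then have "a \<le> t - of_int m" "t - of_int m \<le> a + l" by arith+
    moreover have "frac (t - of_int m) = t"
      using t by (simp add: Sarc_def frac_unique_iff)
    ultimately show "t \<in> arc a l" unfolding arc_def by (metis atLeastAtMost_iff image_eqI)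
  qed
qed

lemma Sarc_shift_int: "Sarc (c + of_int k) h = Sarc c h"
proof -
  have "cd (t - (c + of_int k)) = cd (t - c)" for t
    using cd_shift_int[of "t - c" "-k"] by (simp add: algebra_simps)
  then show ?thesis by (simp add: Sarc_def)
qed

lemma Sarc_frac: "Sarc (frac c) h = Sarc c h"
  using Sarc_shift_int[of "frac c" "\<lfloor>c\<rfloor>" h] by (simp add: frac_def)

lemma Sarc_big: "1/2 \<le> h \<Longrightarrow> Sarc c h = {0..<1}"
  by (auto simp: Sarc_def intro: order_trans[OF cd_le_half])

lemma Sarc_mono: "h \<le> h' \<Longrightarrow> Sarc c h \<subseteq> Sarc c h'"
  by (auto simp: Sarc_def)

lemma Sarc_sub: "cd (c - c') \<le> e \<Longrightarrow> Sarc c h \<subseteq> Sarc c' (h + e)"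
proof
  fix t assume "cd (c - c') \<le> e" "t \<in> Sarc c h"
  moreover have "cd (t - c') \<le> cd (t - c) + cd (c - c')"
    using cd_triangle[of "t - c" "c - c'"] by simp
  ultimately show "t \<in> Sarc c' (h + e)" by (auto simp: Sarc_def)
qed

lemma Sarc_borel: "Sarc c h \<in> sets borel"
proof -
  have "closed {t. cd (t - c) \<le> h}"
    by (intro closed_Collect_le continuous_on_compose2[OF cd_cont]) (auto intro!: continuous_intros)
  then have "{t. cd (t - c) \<le> h} \<in> sets borel" by simp
  moreover have "Sarc c h = {0..<1} \<inter> {t. cd (t - c) \<le> h}" by (auto simp: Sarc_def)
  ultimately show ?thesis by auto
qed

lemma torus_space: "torus_prob \<mu> \<Longrightarrow> space \<mu> = {0..<1}"
  unfolding torus_prob_def by (metis sets_eq_imp_space_eq space_borel space_restrict_space inf_top_right)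

lemma torus_sets: "torus_prob \<mu> \<Longrightarrow> A \<in> sets borel \<Longrightarrow> A \<subseteq> {0..<1} \<Longrightarrow> A \<in> sets \<mu>"
  unfolding torus_prob_def by (simp add: sets_restrict_space_iff)

lemma torus_Sarc: "torus_prob \<mu> \<Longrightarrow> Sarc c h \<in> sets \<mu>"
  by (rule torus_sets[OF _ Sarc_borel]) (auto simp: Sarc_def)

lemma torus_meas: "torus_prob \<mu> \<Longrightarrow> f \<in> borel_measurable borel \<Longrightarrow> f \<in> borel_measurable \<mu>"
  unfolding torus_prob_def
  by (metis measurable_cong_sets measurable_restrict_space1)

lemma torus_ps: "torus_prob \<mu> \<Longrightarrow> prob_space \<mu>"
  unfolding torus_prob_def by simp

lemma Sarc_big_meas: "torus_prob \<mu> \<Longrightarrow> 1/2 \<le> h \<Longrightarrow> measure \<mu> (Sarc c h) = 1"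
  using Sarc_big[of h c] torus_space[of \<mu>] torus_ps[of \<mu>] prob_space.prob_space by metis

lemma discr_eq: "discr \<mu> = Sup {measure \<mu> (Sarc c h) - 2*h | c h. 0 \<le> h \<and> h \<le> 1/2}"
proof -
  have "{measure \<mu> (arc a l) - l | a l. 0 \<le> l \<and> l \<le> 1} = {measure \<mu> (Sarc c h) - 2*h | c h. 0 \<le> h \<and> h \<le> 1/2}"
  proof safe
    fix a l :: real assume "0 \<le> l" "l \<le> 1"
    then show "\<exists>c h. measure \<mu> (arc a l) - l = measure \<mu> (Sarc c h) - 2*h \<and> 0 \<le> h \<and> h \<le> 1/2"
      by (intro exI[of _ "a + l/2"] exI[of _ "l/2"]) (simp add: arc_eq)
  next
    fix c h :: real assume "0 \<le> h" "h \<le> 1/2"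
    then show "\<exists>a l. measure \<mu> (Sarc c h) - 2*h = measure \<mu> (arc a l) - l \<and> 0 \<le> l \<and> l \<le> 1"
      by (intro exI[of _ "c - h"] exI[of _ "2*h"]) (simp add: arc_eq)
  qed
  then show ?thesis by (simp add: discr_def)
qed

lemma discr_bdd: "torus_prob \<mu> \<Longrightarrow> bdd_above {measure \<mu> (Sarc c h) - 2*h | c h. 0 \<le> h \<and> h \<le> 1/2}"
proof (intro bdd_aboveI[of _ 1])
  fix x assume "torus_prob \<mu>" "x \<in> {measure \<mu> (Sarc c h) - 2*h | c h. 0 \<le> h \<and> h \<le> 1/2}"
  then obtain c h where ch: "x = measure \<mu> (Sarc c h) - 2*h" "0 \<le> h" by blast
  have "measure \<mu> (Sarc c h) \<le> 1" by (rule prob_space.prob_le_1[OF torus_ps[OF \<open>torus_prob \<mu>\<close>]])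
  then show "x \<le> 1" using ch by linarith
qed

lemma discr_upper:
  assumes "torus_prob \<mu>" "0 \<le> h"
  shows "measure \<mu> (Sarc c h) - 2*h \<le> discr \<mu>"
proof (cases "h \<le> 1/2")
  case True
  then show ?thesis unfolding discr_eq
    by (intro cSup_upper discr_bdd assms) (use assms in auto)
next
  case False
  have "measure \<mu> (Sarc c (1/2)) - 2*(1/2) \<in> {measure \<mu> (Sarc c h) - 2*h | c h. 0 \<le> h \<and> h \<le> 1/2}"
    by (intro CollectI exI[of _ c] exI[of _ "1/2::real"]) simp
  then have "measure \<mu> (Sarc c (1/2)) - 2*(1/2) \<le> discr \<mu>" unfolding discr_eq
    by (intro cSup_upper discr_bdd assms)
  moreover have "measure \<mu> (Sarc c h) = measure \<mu> (Sarc c (1/2))"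
    using False Sarc_big_meas[OF assms(1)] by simp
  ultimately show ?thesis using False by simp
qed

lemma discr_nonneg: "torus_prob \<mu> \<Longrightarrow> 0 \<le> discr \<mu>"
  using discr_upper[of \<mu> "1/2" 0] Sarc_big_meas[of \<mu> "1/2" 0] by simp

lemma discr_approx:
  assumes "torus_prob \<mu>" "e > 0"
  shows "\<exists>c h. 0 \<le> h \<and> h \<le> 1/2 \<and> discr \<mu> - e < measure \<mu> (Sarc c h) - 2*h"
proof -
  have "discr \<mu> - e < Sup {measure \<mu> (Sarc c h) - 2*h | c h. 0 \<le> h \<and> h \<le> 1/2}"
    using assms by (simp add: discr_eq)
  then show ?thesis
    by (subst (asm) less_cSup_iff) (use discr_bdd[OF assms(1)] in auto)
qed

lemma discr_least:
  assumes "torus_prob \<mu>" "\<And>c h. 0 \<le> h \<Longrightarrow> h \<le> 1/2 \<Longrightarrow> measure \<mu> (Sarc c h) - 2*h \<le> B"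
  shows "discr \<mu> \<le> B"
  unfolding discr_eq by (rule cSup_least) (use assms in auto)

definition tf :: "real \<Rightarrow> real \<Rightarrow> real \<Rightarrow> real \<Rightarrow> real" where
  "tf c h e t = max 0 (min 1 ((h + e - cd (t - c)) / e))"

lemma tf_cont: "e > 0 \<Longrightarrow> continuous_on UNIV (tf c h e)"
  unfolding tf_def
  by (intro continuous_intros continuous_on_compose2[OF cd_cont]) auto

lemma tf_per: "tf c h e (t + 1) = tf c h e t"
proof -
  have "cd (t + 1 - c) = cd (t - c)" using cd_shift1[of "t - c"] by (simp add: algebra_simps)
  then show ?thesis by (simp add: tf_def)
qed

lemma tf_bounds: "0 \<le> tf c h e t" "tf c h e t \<le> 1"
  by (auto simp: tf_def)

lemma tf_ge: "e > 0 \<Longrightarrow> 0 \<le> t \<Longrightarrow> t < 1 \<Longrightarrow> indicator (Sarc c h) t \<le> tf c h e t"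
  by (auto simp: tf_def Sarc_def indicator_def field_simps)

lemma tf_le: "e > 0 \<Longrightarrow> 0 \<le> t \<Longrightarrow> t < 1 \<Longrightarrow> tf c h e t \<le> indicator (Sarc c (h + e)) t"
  by (auto simp: tf_def Sarc_def indicator_def field_simps)

lemma cd_meas[measurable]: "cd \<in> borel_measurable borel"
  using cd_cont by (rule borel_measurable_continuous_onI)

lemma tf_meas: "tf c h e \<in> borel_measurable borel"
  unfolding tf_def by measurable

lemma tf_int: assumes "torus_prob \<mu>" shows "integrable \<mu> (tf c h e)"
proof -
  interpret prob_space \<mu> using torus_ps[OF assms] .
  show ?thesis
    by (rule integrable_const_bound[where B=1]) (auto simp: tf_bounds torus_meas[OF assms tf_meas])
qed

lemma tf_lower:
  assumes "torus_prob \<mu>" "e > 0"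
  shows "measure \<mu> (Sarc c h) \<le> (\<integral>t. tf c h e t \<partial>\<mu>)"
proof -
  interpret prob_space \<mu> using torus_ps[OF assms(1)] .
  have ii: "integrable \<mu> (indicator (Sarc c h) :: real \<Rightarrow> real)"
    by (rule integrable_real_indicator[OF torus_Sarc[OF assms(1)]]) (simp add: less_top[symmetric])
  have "measure \<mu> (Sarc c h) = (\<integral>t. indicator (Sarc c h) t \<partial>\<mu>)"
    using torus_Sarc[OF assms(1)] by (simp add: Int_absorb2 sets.sets_into_space)
  also have "\<dots> \<le> (\<integral>t. tf c h e t \<partial>\<mu>)"
    by (rule integral_mono) (use tf_int[OF assms(1)] tf_ge[OF assms(2)] torus_space[OF assms(1)]
        torus_Sarc[OF assms(1)] ii in auto)
  finally show ?thesis .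
qed

lemma tf_upper:
  assumes "torus_prob \<mu>" "e > 0"
  shows "(\<integral>t. tf c h e t \<partial>\<mu>) \<le> measure \<mu> (Sarc c (h + e))"
proof -
  interpret prob_space \<mu> using torus_ps[OF assms(1)] .
  have ii: "integrable \<mu> (indicator (Sarc c (h+e)) :: real \<Rightarrow> real)"
    by (rule integrable_real_indicator[OF torus_Sarc[OF assms(1)]]) (simp add: less_top[symmetric])
  have "(\<integral>t. tf c h e t \<partial>\<mu>) \<le> (\<integral>t. indicator (Sarc c (h + e)) t \<partial>\<mu>)"
    by (rule integral_mono) (use tf_int[OF assms(1)] tf_le[OF assms(2)] torus_space[OF assms(1)]
        torus_Sarc[OF assms(1)] ii in auto)
  also have "\<dots> = measure \<mu> (Sarc c (h + e))"
    using torus_Sarc[OF assms(1)] by (simp add: Int_absorb2 sets.sets_into_space)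
  finally show ?thesis .
qed

lemma weak_conv_tf:
  assumes "weak_conv \<rho>s \<rho>" "e > 0"
  shows "(\<lambda>n. \<integral>t. tf c h e t \<partial>(\<rho>s n)) \<longlonglongrightarrow> (\<integral>t. tf c h e t \<partial>\<rho>)"
  using assms tf_cont[OF assms(2)] tf_per unfolding weak_conv_def by blast

lemma meas_mono_torus:
  assumes "torus_prob \<mu>" "A \<subseteq> Sarc c h"
  shows "measure \<mu> A \<le> measure \<mu> (Sarc c h)"
proof -
  interpret prob_space \<mu> using torus_ps[OF assms(1)] .
  show ?thesis using finite_measure_mono[OF assms(2) torus_Sarc[OF assms(1)]] .
qed

lemma discr_lower_ev:
  assumes rho: "torus_prob \<rho>" and rhos: "\<And>n. torus_prob (\<rho>s n)" and wc: "weak_conv \<rho>s \<rho>"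
    and "e > 0"
  shows "eventually (\<lambda>n. discr \<rho> - 4*e < discr (\<rho>s n)) sequentially"
proof -
  obtain c h where ch: "0 \<le> h" "h \<le> 1/2" "discr \<rho> - e < measure \<rho> (Sarc c h) - 2*h"
    using discr_approx[OF rho \<open>e > 0\<close>] by blast
  have lim: "(\<lambda>n. \<integral>t. tf c h e t \<partial>(\<rho>s n)) \<longlonglongrightarrow> (\<integral>t. tf c h e t \<partial>\<rho>)"
    by (rule weak_conv_tf[OF wc \<open>e > 0\<close>])
  have "eventually (\<lambda>n. (\<integral>t. tf c h e t \<partial>\<rho>) - e < (\<integral>t. tf c h e t \<partial>(\<rho>s n))) sequentially"
    using order_tendstoD(1)[OF lim, of "(\<integral>t. tf c h e t \<partial>\<rho>) - e"] \<open>e > 0\<close> by simp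
  then show ?thesis
  proof eventually_elim
    case (elim n)
    have "discr \<rho> - 4*e < measure \<rho> (Sarc c h) - 2*h - 3*e" using ch by simp
    also have "\<dots> \<le> (\<integral>t. tf c h e t \<partial>\<rho>) - 2*h - 3*e" using tf_lower[OF rho \<open>e>0\<close>] by simp
    also have "\<dots> < (\<integral>t. tf c h e t \<partial>(\<rho>s n)) - 2*h - 2*e" using elim by simp
    also have "\<dots> \<le> measure (\<rho>s n) (Sarc c (h + e)) - 2*(h + e)"
      using tf_upper[OF rhos \<open>e>0\<close>] by simp
    also have "\<dots> \<le> discr (\<rho>s n)" by (rule discr_upper[OF rhos]) (use ch \<open>e > 0\<close> in simp)
    finally show ?case .
  qed
qed

lemma nat_floor_bounds: "0 \<le> (x::real) \<Longrightarrow> real (nat \<lfloor>x\<rfloor>) \<le> x \<and> x < real (nat \<lfloor>x\<rfloor>) + 1"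
  by (simp add: of_nat_nat)
lemma nat_ceil_bounds: "0 \<le> (x::real) \<Longrightarrow> x \<le> real (nat \<lceil>x\<rceil>) \<and> real (nat \<lceil>x\<rceil>) < x + 1"
  using ceiling_correct[of x] by (simp add: of_nat_nat)
lemma nat_floor_less: "0 \<le> (x::real) \<Longrightarrow> x < real N \<Longrightarrow> nat \<lfloor>x\<rfloor> < N"
  using nat_floor_bounds[of x] by linarith
lemma nat_ceil_le: "0 \<le> (x::real) \<Longrightarrow> x \<le> real N \<Longrightarrow> nat \<lceil>x\<rceil> \<le> N"
  by (simp add: nat_le_iff ceiling_le_iff)

lemma discr_upper_ev:
  assumes rho: "torus_prob \<rho>" and rhos: "\<And>n. torus_prob (\<rho>s n)" and wc: "weak_conv \<rho>s \<rho>"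
    and N: "N > (0::nat)"
  shows "eventually (\<lambda>n. discr (\<rho>s n) \<le> discr \<rho> + 7 / N) sequentially"
proof -
  define e where "e = 1 / real N"
  have e: "e > 0" using N by (simp add: e_def)
  define f where "f = (\<lambda>(j::nat,i::nat) t. tf (j * e) (i * e + e) e t)"
  define G where "G = {..<N} \<times> {..N}"
  have "finite G" by (simp add: G_def)
  have "\<forall>p\<in>G. eventually (\<lambda>n. (\<integral>t. f p t \<partial>(\<rho>s n)) < (\<integral>t. f p t \<partial>\<rho>) + e) sequentially"
  proof
    fix p assume "p \<in> G"
    obtain j i where p: "p = (j, i)" by (cases p)
    have lim: "(\<lambda>n. \<integral>t. f p t \<partial>(\<rho>s n)) \<longlonglongrightarrow> (\<integral>t. f p t \<partial>\<rho>)"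
      unfolding p f_def by (simp add: weak_conv_tf[OF wc e])
    show "eventually (\<lambda>n. (\<integral>t. f p t \<partial>(\<rho>s n)) < (\<integral>t. f p t \<partial>\<rho>) + e) sequentially"
      using order_tendstoD(2)[OF lim, of "(\<integral>t. f p t \<partial>\<rho>) + e"] e by simp
  qed
  from eventually_ball_finite[OF \<open>finite G\<close> this]
  show ?thesis
  proof eventually_elim
    case (elim n)
    show ?case
    proof (rule discr_least[OF rhos])
      fix c h :: real assume h: "0 \<le> h" "h \<le> 1/2"
      define j where "j = nat \<lfloor>frac c * N\<rfloor>"
      define i where "i = nat \<lceil>h * N\<rceil>"
      have fc: "0 \<le> frac c" "frac c < 1" by (auto simp: frac_lt_1)
      have Nr: "real N > 0" using N by simp
      have fcN: "0 \<le> frac c * N" "frac c * N < real N" using fc Nr by auto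
      have jN: "j < N" unfolding j_def by (rule nat_floor_less[OF fcN])
      have j1: "real j \<le> frac c * N" "frac c * N < real j + 1"
        using nat_floor_bounds[OF fcN(1)] unfolding j_def by auto
      have hN: "0 \<le> h * N" "h * N \<le> real N" using h Nr by auto
      have iN: "i \<le> N" unfolding i_def by (rule nat_ceil_le[OF hN])
      have i1: "h * N \<le> real i" "real i < h * N + 1"
        using nat_ceil_bounds[OF hN(1)] unfolding i_def by auto
      have cj: "cd (c - j * e) \<le> e"
      proof -
        have "cd (c - j * e) = cd ((frac c - j * e) + of_int \<lfloor>c\<rfloor>)" by (simp add: frac_def)
        also have "\<dots> = cd (frac c - j * e)" by (rule cd_shift_int)
        also have "\<dots> \<le> \<bar>frac c - j * e\<bar>" by (rule cd_le_abs)
        also have "\<dots> \<le> e"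
        proof -
          have A: "frac c - j * e = (frac c * N - j) * e" using Nr by (simp add: e_def field_simps)
          have "0 \<le> (frac c * N - j) * e" using j1 e by simp
          moreover have "(frac c * N - j) * e \<le> 1 * e" by (rule mult_right_mono) (use j1 e in auto)
          ultimately show ?thesis unfolding A by simp
        qed
        finally show ?thesis .
      qed
      have hi: "h \<le> i * e" "i * e \<le> h + e" using i1 Nr by (auto simp: e_def field_simps)
      have "Sarc c h \<subseteq> Sarc (j * e) (h + e)" by (rule Sarc_sub[OF cj])
      also have "\<dots> \<subseteq> Sarc (j * e) (i * e + e)" by (rule Sarc_mono) (use hi in simp)
      finally have sub: "Sarc c h \<subseteq> Sarc (j * e) (i * e + e)" .
      have pG: "(j, i) \<in> G" using jN iN by (simp add: G_def)
      have "measure (\<rho>s n) (Sarc c h) \<le> measure (\<rho>s n) (Sarc (j * e) (i * e + e))"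
        by (rule meas_mono_torus[OF rhos sub])
      also have "\<dots> \<le> (\<integral>t. f (j, i) t \<partial>(\<rho>s n))" unfolding f_def using tf_lower[OF rhos e] by simp
      also have "\<dots> < (\<integral>t. f (j, i) t \<partial>\<rho>) + e" using elim pG by blast
      also have "\<dots> \<le> measure \<rho> (Sarc (j * e) (i * e + e + e)) + e"
        unfolding f_def using tf_upper[OF rho e, of "j * e" "i * e + e"] by simp
      also have "\<dots> \<le> discr \<rho> + 2 * (i * e + e + e) + e"
        using discr_upper[OF rho, of "i * e + e + e" "j * e"] hi h e by simp
      finally have "measure (\<rho>s n) (Sarc c h) < discr \<rho> + 2 * (i * e + e + e) + e" .
      then show "measure (\<rho>s n) (Sarc c h) - 2 * h \<le> discr \<rho> + 7 / real N"
        using hi by (simp add: e_def)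
    qed
  qed
qed

lemma discr_tendsto:
  assumes rho: "torus_prob \<rho>" and rhos: "\<And>n. torus_prob (\<rho>s n)" and wc: "weak_conv \<rho>s \<rho>"
  shows "(\<lambda>n. discr (\<rho>s n)) \<longlonglongrightarrow> discr \<rho>"
proof (rule order_tendstoI)
  fix a assume "a < discr \<rho>"
  then have "(discr \<rho> - a) / 4 > 0" by simp
  have eq: "discr \<rho> - 4 * ((discr \<rho> - a) / 4) = a" by (simp add: field_simps)
  from discr_lower_ev[OF rho rhos wc \<open>(discr \<rho> - a) / 4 > 0\<close>] show "eventually (\<lambda>n. a < discr (\<rho>s n)) sequentially"
    unfolding eq .
next
  fix a assume "discr \<rho> < a"
  then have "(a - discr \<rho>) / 7 > 0" by simp
  then obtain N where N: "N > 0" "inverse (real N) < (a - discr \<rho>) / 7"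
    using ex_inverse_of_nat_less by blast
  then have "7 / real N < a - discr \<rho>" by (simp add: field_simps)
  with discr_upper_ev[OF rho rhos wc N(1)] show "eventually (\<lambda>n. discr (\<rho>s n) < a) sequentially"
    by (auto elim: eventually_mono)
qed

lemma discr_attained_S:
  assumes mu: "torus_prob \<mu>"
  shows "\<exists>c h. 0 \<le> h \<and> h \<le> 1/2 \<and> discr \<mu> \<le> measure \<mu> (Sarc c h) - 2*h"
proof -
  interpret prob_space \<mu> using torus_ps[OF mu] .
  define D where "D = discr \<mu>"
  have "\<forall>n. \<exists>p. fst p \<in> {0..1} \<and> snd p \<in> {0..1/2} \<and>
      D - inverse (real (Suc n)) < measure \<mu> (Sarc (fst p) (snd p)) - 2 * snd p"
  proof
    fix n
    obtain c h where ch: "0 \<le> h" "h \<le> 1/2" "D - inverse (real (Suc n)) < measure \<mu> (Sarc c h) - 2*h"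
      using discr_approx[OF mu, of "inverse (real (Suc n))"] by (auto simp: D_def)
    show "\<exists>p. fst p \<in> {0..1} \<and> snd p \<in> {0..1/2} \<and>
      D - inverse (real (Suc n)) < measure \<mu> (Sarc (fst p) (snd p)) - 2 * snd p"
      by (rule exI[of _ "(frac c, h)"]) (use ch frac_lt_1[of c] in \<open>auto simp: Sarc_frac\<close>)
  qed
  from choice[OF this] obtain p where pall: "\<forall>n. fst (p n) \<in> {0..1} \<and> snd (p n) \<in> {0..1/2} \<and>
      D - inverse (real (Suc n)) < measure \<mu> (Sarc (fst (p n)) (snd (p n))) - 2 * snd (p n)"
    by blast
  have p: "\<And>n. fst (p n) \<in> {0..1}" "\<And>n. snd (p n) \<in> {0..1/2}"
    "\<And>n. D - inverse (real (Suc n)) < measure \<mu> (Sarc (fst (p n)) (snd (p n))) - 2 * snd (p n)"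
    using pall by blast+
  have "seq_compact ({0..1::real} \<times> {0..1/2::real})"
    by (rule compact_imp_seq_compact) (intro compact_Times compact_Icc)
  moreover have "\<forall>n. p n \<in> {0..1} \<times> {0..1/2}" using p by (simp add: mem_Times_iff)
  ultimately obtain q r where q: "q \<in> {0..1} \<times> {0..1/2}" and r: "strict_mono r"
    and lim: "(p \<circ> r) \<longlonglongrightarrow> q"
    by (rule seq_compactE)
  define c where "c = fst q"
  define h where "h = snd q"
  have h: "0 \<le> h" "h \<le> 1/2" using q by (auto simp: h_def mem_Times_iff)
  have limc: "(\<lambda>k. fst (p (r k))) \<longlonglongrightarrow> c"
    using tendsto_fst[OF lim] by (simp add: c_def comp_def)
  have limh: "(\<lambda>k. snd (p (r k))) \<longlonglongrightarrow> h"
    using tendsto_snd[OF lim] by (simp add: h_def comp_def)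
  have liminv: "(\<lambda>k. inverse (real (Suc (r k)))) \<longlonglongrightarrow> 0"
    using LIMSEQ_subseq_LIMSEQ[OF LIMSEQ_inverse_real_of_nat r] by (simp add: comp_def)
  define B where "B m = Sarc c (h + 2 * inverse (real (Suc m)))" for m
  have Bm: "D + 2*h \<le> measure \<mu> (B m)" for m
  proof -
    define e where "e = inverse (real (Suc m))"
    have e: "e > 0" by (simp add: e_def)
    have ev1: "eventually (\<lambda>k. dist (fst (p (r k))) c < e) sequentially"
      using limc e by (rule tendstoD)
    have ev2: "eventually (\<lambda>k. dist (snd (p (r k))) h < e) sequentially"
      using limh e by (rule tendstoD)
    have ev: "eventually (\<lambda>k. D - inverse (real (Suc (r k))) + 2 * snd (p (r k)) \<le> measure \<mu> (B m)) sequentially"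
      using ev1 ev2
    proof eventually_elim
      case (elim k)
      have "cd (fst (p (r k)) - c) \<le> e" using cd_le_abs[of "fst (p (r k)) - c"] elim by (simp add: dist_real_def)
      then have "Sarc (fst (p (r k))) (snd (p (r k))) \<subseteq> Sarc c (snd (p (r k)) + e)" by (rule Sarc_sub)
      also have "\<dots> \<subseteq> B m" unfolding B_def e_def[symmetric]
        by (rule Sarc_mono) (use elim in \<open>simp add: dist_real_def\<close>)
      finally have "measure \<mu> (Sarc (fst (p (r k))) (snd (p (r k)))) \<le> measure \<mu> (B m)"
        by (intro finite_measure_mono) (simp_all add: B_def torus_Sarc[OF mu])
      then show ?case using p(3)[of "r k"] by simp
    qed
    have "(\<lambda>k. D - inverse (real (Suc (r k))) + 2 * snd (p (r k))) \<longlonglongrightarrow> D - 0 + 2 * h"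
      by (intro tendsto_intros liminv limh)
    from tendsto_le[OF trivial_limit_sequentially tendsto_const this ev] show ?thesis by simp
  qed
  have "(\<lambda>m. measure \<mu> (B m)) \<longlonglongrightarrow> measure \<mu> (\<Inter>m. B m)"
  proof (rule finite_Lim_measure_decseq)
    show "range B \<subseteq> sets \<mu>" using torus_Sarc[OF mu] by (auto simp: B_def)
    show "decseq B" unfolding decseq_def B_def
      by (intro allI impI Sarc_mono) (simp add: field_simps)
  qed
  moreover have "(\<Inter>m. B m) = Sarc c h"
  proof
    have "Sarc c h \<subseteq> B m" for m unfolding B_def by (rule Sarc_mono) simp
    then show "Sarc c h \<subseteq> (\<Inter>m. B m)" by blast
    show "(\<Inter>m. B m) \<subseteq> Sarc c h"
    proof
      fix t assume t: "t \<in> (\<Inter>m. B m)"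
      then have t01: "0 \<le> t" "t < 1" by (auto simp: B_def Sarc_def)
      have "cd (t - c) \<le> h"
      proof (rule ccontr)
        assume "\<not> cd (t - c) \<le> h"
        then have "(cd (t - c) - h) / 2 > 0" by simp
        then obtain m where m: "m > 0" "inverse (real m) < (cd (t - c) - h) / 2"
          using ex_inverse_of_nat_less by blast
        have "t \<in> B (m - 1)" using t by blast
        then have "cd (t - c) \<le> h + 2 * inverse (real m)" using m(1) by (simp add: B_def Sarc_def)
        then show False using m(2) by simp
      qed
      then show "t \<in> Sarc c h" using t01 by (simp add: Sarc_def)
    qed
  qed
  ultimately have "(\<lambda>m. measure \<mu> (B m)) \<longlonglongrightarrow> measure \<mu> (Sarc c h)" by simp
  then have "D + 2*h \<le> measure \<mu> (Sarc c h)"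
    by (rule tendsto_lowerbound) (use Bm in auto)
  then show ?thesis using h by (intro exI[of _ c] exI[of _ h]) (simp add: D_def)
qed

lemma discr_attained:
  assumes mu: "torus_prob \<mu>"
  shows "\<exists>a l. 0 \<le> l \<and> l \<le> 1 \<and> discr \<mu> = measure \<mu> (arc a l) - l"
proof -
  obtain c h where ch: "0 \<le> h" "h \<le> 1/2" "discr \<mu> \<le> measure \<mu> (Sarc c h) - 2*h"
    using discr_attained_S[OF mu] by blast
  have "measure \<mu> (Sarc c h) - 2*h \<le> discr \<mu>" by (rule discr_upper[OF mu ch(1)])
  then have "discr \<mu> = measure \<mu> (arc (c - h) (2*h)) - 2*h" using ch by (simp add: arc_eq)
  then show ?thesis using ch by (intro exI[of _ "c - h"] exI[of _ "2*h"]) simp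
qed

locale Wset =
  fixes W :: "real \<Rightarrow> ereal"
  assumes per: "\<forall>x. W (x + 1) = W x"
    and fin: "\<forall>x. x \<notin> \<int> \<longrightarrow> \<bar>W x\<bar> \<noteq> \<infinity>"
    and L1: "set_integrable lborel {0..1} (\<lambda>x. real_of_ereal (W x))"
    and mean: "(\<integral>x\<in>{0..1}. real_of_ereal (W x) \<partial>lborel) = 0"
    and W0: "W 0 = \<infinity>"
begin

abbreviation w :: "real \<Rightarrow> real" where "w x \<equiv> real_of_ereal (W x)"

lemma W_shift_nat: "W (x + real n) = W x"
proof (induction n arbitrary: x)
  case (Suc n)
  have "W (x + real (Suc n)) = W ((x + real n) + 1)" by (simp add: algebra_simps)
  also have "\<dots> = W x" using per Suc by simp
  finally show ?case .
qed simp

lemma W_shift_int: "W (x + of_int k) = W x"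
proof (cases "k \<ge> 0")
  case True
  then show ?thesis using W_shift_nat[of x "nat k"] by simp
next
  case False
  have "W (x + of_int k) = W ((x + of_int k) + real (nat (-k)))" by (rule W_shift_nat[symmetric])
  also have "(x + of_int k) + real (nat (-k)) = x" using False by simp
  finally show ?thesis .
qed

lemma W_Ints: "x \<in> \<int> \<Longrightarrow> W x = \<infinity>"
  by (elim Ints_cases) (metis W0 W_shift_int add_0)

lemma W_eq: "W x = (if x \<in> \<int> then \<infinity> else ereal (w x))"
proof (cases "x \<in> \<int>")
  case True
  then show ?thesis by (simp add: W_Ints)
next
  case False
  then have "\<bar>W x\<bar> \<noteq> \<infinity>" using fin by auto
  then show ?thesis using False by (cases "W x") auto
qed

lemma w_shift_int: "w (x + of_int k) = w x"
  by (simp add: W_shift_int)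

lemma w_frac: "w (frac x) = w x"
  using w_shift_int[of "frac x" "\<lfloor>x\<rfloor>"] by (simp add: frac_def)

lemma w_meas[measurable]: "w \<in> borel_measurable borel"
proof -
  have "(\<lambda>x. indicator {0..1} x *\<^sub>R w x) \<in> borel_measurable lborel"
    using L1 unfolding set_integrable_def by (rule borel_measurable_integrable)
  then have g: "(\<lambda>x. indicator {0..1} x *\<^sub>R w x) \<in> borel_measurable borel" by simp
  have fr0: "(\<lambda>x. x - real_of_int \<lfloor>x\<rfloor>) \<in> borel_measurable borel"
    by (intro borel_measurable_diff borel_measurable_real_floor) simp
  have "frac = (\<lambda>x::real. x - real_of_int \<lfloor>x\<rfloor>)" by (simp add: frac_def fun_eq_iff)
  with fr0 have fr: "(frac :: real \<Rightarrow> real) \<in> borel_measurable borel" by simp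
  have "(\<lambda>x. (\<lambda>x. indicator {0..1} x *\<^sub>R w x) (frac x)) \<in> borel_measurable borel"
    by (rule measurable_compose[OF fr g])
  moreover have "(\<lambda>x. (\<lambda>x. indicator {0..1} x *\<^sub>R w x) (frac x)) = w"
  proof
    fix x :: real
    have "frac x \<le> 1" using frac_lt_1[of x] by simp
    then show "(\<lambda>x. indicator {0..1} x *\<^sub>R w x) (frac x) = w x" by (simp add: w_frac indicator_def)
  qed
  ultimately show ?thesis by simp
qed

lemma Ints_borel: "(\<int> :: real set) \<in> sets borel"
proof (rule sets.countable)
  show "countable (\<int> :: real set)" unfolding Ints_def by simp
qed simp

lemma W_meas[measurable]: "W \<in> borel_measurable borel"
proof -
  have "(\<lambda>x. if x \<in> \<int> then \<infinity> else ereal (w x)) \<in> borel_measurable borel"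
    using Ints_borel by measurable
  then show ?thesis by (subst (asm) W_eq[symmetric, abs_def]) simp
qed

lemma w_int_unit: "set_integrable lborel {of_int k .. of_int k + 1} w"
proof -
  let ?f = "\<lambda>x. indicator {of_int k .. of_int k + 1} x *\<^sub>R w x"
  have "(\<lambda>x. ?f (of_int k + 1 * x)) = (\<lambda>x. indicator {0..1} x *\<^sub>R w x)"
    by (auto simp: indicator_def w_shift_int add.commute[of "of_int k"])
  then have "integrable lborel (\<lambda>x. ?f (of_int k + 1 * x))"
    using L1 by (simp add: set_integrable_def)
  then show ?thesis unfolding set_integrable_def
    by (subst (asm) lborel_integrable_real_affine_iff) simp_all
qed

lemma w_int_sym: "set_integrable lborel {- real n .. real n} w"
proof (induction n)
  case 0
  have "{- real 0 .. real 0} \<subseteq> {of_int 0 .. of_int 0 + 1}" by auto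
  from set_integrable_subset[OF w_int_unit[of 0] _ this] show ?case by simp
next
  case (Suc n)
  have a: "set_integrable lborel {- real (Suc n) .. - real n} w"
    using w_int_unit[of "- int (Suc n)"] by simp
  have b: "set_integrable lborel {real n .. real (Suc n)} w"
    using w_int_unit[of "int n"] by (simp add: add.commute)
  have "set_integrable lborel ({- real (Suc n) .. - real n} \<union> {- real n .. real n} \<union> {real n .. real (Suc n)}) w"
    by (intro set_integrable_Un a b Suc) auto
  moreover have "{- real (Suc n) .. - real n} \<union> {- real n .. real n} \<union> {real n .. real (Suc n)} = {- real (Suc n) .. real (Suc n)}"
    by auto
  ultimately show ?case by simp
qed

lemma w_int_loc: "set_integrable lborel {a..b} w"
proof -
  define n where "n = nat \<lceil>\<bar>a\<bar> + \<bar>b\<bar>\<rceil>"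
  have "\<bar>a\<bar> + \<bar>b\<bar> \<le> real n" unfolding n_def by linarith
  then have "{a..b} \<subseteq> {- real n .. real n}" by auto
  from set_integrable_subset[OF w_int_sym[of n] _ this] show ?thesis by simp
qed

lemma w_hk_int: "w integrable_on {a..b}"
  using set_borel_integral_eq_integral(1)[OF w_int_loc] .

lemma w_lint_hk: "(LINT x:{a..b}|lborel. w x) = integral {a..b} w"
  using set_borel_integral_eq_integral(2)[OF w_int_loc] .

lemma w_translate: "(LINT x:{c..d}|lborel. w (x - y)) = (LINT x:{c - y..d - y}|lborel. w x)"
proof -
  let ?f = "\<lambda>x. indicator {c - y..d - y} x *\<^sub>R w x"
  have "(LINT x:{c - y..d - y}|lborel. w x) = (\<integral>x. ?f x \<partial>lborel)"
    by (simp add: set_lebesgue_integral_def)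
  also have "\<dots> = \<bar>1\<bar> *\<^sub>R (\<integral>x. ?f (-y + 1 * x) \<partial>lborel)"
    by (rule lborel_integral_real_affine) simp
  also have "(\<lambda>x. ?f (-y + 1 * x)) = (\<lambda>x. indicator {c..d} x *\<^sub>R w (x - y))"
    by (auto simp: indicator_def)
  finally show ?thesis by (simp add: set_lebesgue_integral_def)
qed

lemma per_mean:
  assumes "-1 \<le> a" "a \<le> 0"
  shows "integral {a..a+1} w = 0"
proof -
  have "integral {a..a+1} w = integral {a..0} w + integral {0..a+1} w"
    using Henstock_Kurzweil_Integration.integral_combine[OF assms(2) _ w_hk_int, of "a+1"] assms by simp
  also have "integral {a..0} w = integral {a+1..1} w"
  proof -
    have "integral {a..0} w = (LINT x:{a+1..1}|lborel. w (x - 1))"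
      using w_translate[of "a+1" 1 1] by (simp add: w_lint_hk)
    also have "\<dots> = (LINT x:{a+1..1}|lborel. w x)"
      using w_shift_int[of _ "-1"] by simp
    finally show ?thesis by (simp add: w_lint_hk)
  qed
  also have "integral {a+1..1} w + integral {0..a+1} w = integral {0..1} w"
    using Henstock_Kurzweil_Integration.integral_combine[of 0 "a+1" 1 w] w_hk_int assms by simp
  also have "\<dots> = 0" using mean w_lint_hk[of 0 1] by simp
  finally show ?thesis .
qed

end

context Wset begin

definition gI :: "real \<Rightarrow> real \<Rightarrow> real \<Rightarrow> real" where
  "gI c d y = (LINT x:{c..d}|lborel. w (x - y))"

lemma gI_hk: "gI c d y = integral {c - y..d - y} w"
  unfolding gI_def w_translate w_lint_hk ..

lemma gI_per: "gI c d (y + 1) = gI c d y"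
proof -
  have "w (x - (y + 1)) = w (x - y)" for x
    using w_shift_int[of "x - y" "-1"] by (simp add: algebra_simps)
  then show ?thesis by (simp add: gI_def)
qed

lemma gI_cont:
  assumes cd: "c \<le> d"
  shows "continuous_on UNIV (gI c d)"
proof (rule continuous_at_imp_continuous_on, intro ballI)
  fix y0 :: real
  define R where "R = \<bar>y0\<bar> + \<bar>c\<bar> + \<bar>d\<bar> + 2"
  define F where "F t = integral {-R..t} w" for t
  have Fc: "continuous_on {-R..R} F"
    unfolding F_def by (rule indefinite_integral_continuous_1[OF w_hk_int])
  have inR: "y \<in> ball y0 1 \<Longrightarrow> c - y \<in> {-R..R} \<and> d - y \<in> {-R..R}" for y
    by (auto simp: R_def dist_real_def)
  have eq: "gI c d y = F (d - y) - F (c - y)" if "y \<in> ball y0 1" for y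
  proof -
    have "-R \<le> c - y" "c - y \<le> d - y" using inR[OF that] cd by auto
    from Henstock_Kurzweil_Integration.integral_combine[OF this w_hk_int]
    show ?thesis by (simp add: gI_hk F_def)
  qed
  have "continuous_on (ball y0 1) (\<lambda>y. F (d - y) - F (c - y))"
    by (intro continuous_intros continuous_on_compose2[OF Fc]) (use inR in auto)
  then have "continuous_on (ball y0 1) (gI c d)"
    by (rule continuous_on_cong[THEN iffD1, rotated 2]) (simp_all add: eq)
  then show "isCont (gI c d) y0"
    using continuous_on_eq_continuous_at[OF open_ball, of y0 1 "gI c d"] by simp
qed

lemma gI_mean:
  assumes "0 \<le> y" "y < 1"
  shows "gI 0 1 y = 0"
  using per_mean[of "-y"] assms by (simp add: gI_hk)

end

lemma torus_psf: "torus_prob \<mu> \<Longrightarrow> pair_sigma_finite lborel \<mu>"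
proof -
  assume mu: "torus_prob \<mu>"
  interpret prob_space \<mu> using torus_ps[OF mu] .
  show ?thesis unfolding pair_sigma_finite_def using sigma_finite_lborel sigma_finite_measure_axioms by blast
qed

lemma diff_meas:
  assumes mu: "torus_prob \<mu>"
  shows "(\<lambda>p. fst p - snd p) \<in> borel_measurable (lborel \<Otimes>\<^sub>M \<mu>)"
proof -
  have f: "fst \<in> borel_measurable (lborel \<Otimes>\<^sub>M \<mu>)"
    using measurable_fst[of lborel \<mu>] by simp
  have s: "snd \<in> borel_measurable (lborel \<Otimes>\<^sub>M \<mu>)"
    by (rule measurable_compose[OF measurable_snd torus_meas[OF mu, of "\<lambda>y. y"]]) simp
  show ?thesis by (intro borel_measurable_diff f s)
qed

context Wset begin

definition Iw :: "real measure \<Rightarrow> real \<Rightarrow> real" where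
  "Iw \<mu> x = (\<integral>y. w (x - y) \<partial>\<mu>)"

lemma F_meas:
  assumes mu: "torus_prob \<mu>"
  shows "(\<lambda>p. indicator {c..d} (fst p) * w (fst p - snd p)) \<in> borel_measurable (lborel \<Otimes>\<^sub>M \<mu>)"
proof -
  have f: "fst \<in> borel_measurable (lborel \<Otimes>\<^sub>M \<mu>)"
    using measurable_fst[of lborel \<mu>] by simp
  have a: "(\<lambda>p. w (fst p - snd p)) \<in> borel_measurable (lborel \<Otimes>\<^sub>M \<mu>)"
    by (rule measurable_compose[OF diff_meas[OF mu] w_meas])
  have b: "(\<lambda>p. indicator {c..d} (fst p) :: real) \<in> borel_measurable (lborel \<Otimes>\<^sub>M \<mu>)"
    by (rule measurable_compose[OF f]) simp
  show ?thesis by (rule borel_measurable_times[OF b a])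
qed

lemma F_int:
  assumes mu: "torus_prob \<mu>" and cd: "0 \<le> c" "d \<le> 1"
  shows "integrable (lborel \<Otimes>\<^sub>M \<mu>) (\<lambda>p. indicator {c..d} (fst p) * w (fst p - snd p))"
proof -
  interpret P: pair_sigma_finite lborel \<mu> using torus_psf[OF mu] .
  interpret prob_space \<mu> using torus_ps[OF mu] .
  let ?F = "\<lambda>p. indicator {c..d} (fst p) * w (fst p - snd p)"
  define C where "C = (\<integral>\<^sup>+x. ennreal (norm (indicator {-1..1} x *\<^sub>R w x)) \<partial>lborel)"
  have C: "C < \<infinity>"
    using w_int_loc[of "-1" 1] unfolding set_integrable_def integrable_iff_bounded C_def by simp
  have nm: "(\<lambda>p. ennreal (norm (?F p))) \<in> borel_measurable (lborel \<Otimes>\<^sub>M \<mu>)"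
    using F_meas[OF mu] by measurable
  have inner: "(\<integral>\<^sup>+x. ennreal (norm (?F (x, y))) \<partial>lborel) \<le> C" if y: "y \<in> space \<mu>" for y
  proof -
    have y01: "0 \<le> y" "y < 1" using y torus_space[OF mu] by auto
    have "(\<integral>\<^sup>+x. ennreal (norm (?F (x, y))) \<partial>lborel)
        \<le> (\<integral>\<^sup>+x. ennreal (norm (indicator {-1..1} (-y + 1 * x) *\<^sub>R w (-y + 1 * x))) \<partial>lborel)"
      by (rule nn_integral_mono) (use y01 cd in \<open>auto simp: indicator_def real_of_ereal_pos\<close>)
    also have "\<dots> = C"
    proof -
      have "C = ennreal \<bar>1\<bar> * (\<integral>\<^sup>+x. ennreal (norm (indicator {-1..1} (-y + 1 * x) *\<^sub>R w (-y + 1 * x))) \<partial>lborel)"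
        unfolding C_def by (rule nn_integral_real_affine) simp_all
      then show ?thesis by simp
    qed
    finally show ?thesis .
  qed
  have "(\<integral>\<^sup>+p. ennreal (norm (?F p)) \<partial>(lborel \<Otimes>\<^sub>M \<mu>))
      = (\<integral>\<^sup>+y. (\<integral>\<^sup>+x. ennreal (norm (?F (x, y))) \<partial>lborel) \<partial>\<mu>)"
    using P.nn_integral_snd[OF nm] by simp
  also have "\<dots> \<le> (\<integral>\<^sup>+y. C \<partial>\<mu>)"
    by (rule nn_integral_mono) (rule inner)
  also have "\<dots> = C" by (simp add: emeasure_space_1)
  finally have "(\<integral>\<^sup>+p. ennreal (norm (?F p)) \<partial>(lborel \<Otimes>\<^sub>M \<mu>)) < \<infinity>" using C by simp
  then show ?thesis unfolding integrable_iff_bounded using F_meas[OF mu] by simp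
qed

lemma K_fubini:
  assumes mu: "torus_prob \<mu>" and cd: "0 \<le> c" "d \<le> 1"
  shows "set_integrable lborel {c..d} (Iw \<mu>)"
    and "(LINT x:{c..d}|lborel. Iw \<mu> x) = (\<integral>y. gI c d y \<partial>\<mu>)"
proof -
  interpret P: pair_sigma_finite lborel \<mu> using torus_psf[OF mu] .
  have int: "integrable (lborel \<Otimes>\<^sub>M \<mu>) (\<lambda>p. indicator {c..d} (fst p) * w (fst p - snd p))"
    by (rule F_int[OF mu cd])
  have eq: "(\<lambda>x. \<integral>y. (\<lambda>p. indicator {c..d} (fst p) * w (fst p - snd p)) (x, y) \<partial>\<mu>)
      = (\<lambda>x. indicator {c..d} x *\<^sub>R Iw \<mu> x)"
    by (simp add: Iw_def)
  show "set_integrable lborel {c..d} (Iw \<mu>)"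
    using P.integrable_fst'[OF int] unfolding set_integrable_def eq .
  have "(\<integral>y. (\<integral>x. indicator {c..d} x * w (x - y) \<partial>lborel) \<partial>\<mu>)
      = (\<integral>x. (\<integral>y. indicator {c..d} x * w (x - y) \<partial>\<mu>) \<partial>lborel)"
    by (rule P.Fubini_integral) (use int in \<open>simp add: case_prod_beta'\<close>)
  then show "(LINT x:{c..d}|lborel. Iw \<mu> x) = (\<integral>y. gI c d y \<partial>\<mu>)"
    by (simp add: gI_def Iw_def set_lebesgue_integral_def)
qed

end

lemma enn2ereal_fin: "(A::ennreal) \<noteq> \<infinity> \<Longrightarrow> enn2ereal A = ereal (enn2real A)"
  by (cases A rule: ennreal_cases) auto

context Wset begin

lemma conv_AE:
  assumes mu: "torus_prob \<mu>"
  shows "AE x in lborel. 0 \<le> x \<and> x < 1 \<longrightarrow> conv W \<mu> x = ereal (Iw \<mu> x)"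
proof -
  interpret P: pair_sigma_finite lborel \<mu> using torus_psf[OF mu] .
  interpret prob_space \<mu> using torus_ps[OF mu] .
  have A1: "AE x in lborel. integrable \<mu> (\<lambda>y. indicator {0..1} x * w (x - y))"
    using P.AE_integrable_fst'[OF F_int[OF mu, of 0 1]] by simp
  have A2: "AE x in lborel. measure \<mu> {x} = 0"
    by (rule AE_I'[OF countable_imp_null_set_lborel[OF countable_support]]) auto
  from A1 A2 show ?thesis
  proof eventually_elim
    case (elim x)
    show ?case
    proof
      assume x: "0 \<le> x \<and> x < 1"
      have int: "integrable \<mu> (\<lambda>y. w (x - y))"
        using elim(1) x by (simp add: indicator_def)
      have xs: "{x} \<in> sets \<mu>" using x by (intro torus_sets[OF mu]) auto
      have "emeasure \<mu> {x} = 0" using elim(2) by (simp add: emeasure_eq_measure)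
      then have "{x} \<in> null_sets \<mu>" using xs by (simp add: null_sets_def)
      then have AEy: "AE y in \<mu>. y \<noteq> x" by (rule AE_I') auto
      have AEy2: "AE y in \<mu>. W (x - y) = ereal (w (x - y))"
        using AEy AE_space
      proof eventually_elim
        case (elim y)
        have y: "0 \<le> y" "y < 1" using elim(2) torus_space[OF mu] by auto
        have "x - y \<notin> \<int>"
        proof
          assume "x - y \<in> \<int>"
          then obtain k where k: "x - y = of_int k" by (elim Ints_cases)
          then have "-1 < (of_int k :: real)" "(of_int k :: real) < 1" using x y by linarith+
          then have "k = 0" by linarith
          then show False using k elim(1) by simp
        qed
        then show ?case by (subst W_eq) simp
      qed
      have "AE y in \<mu>. e2ennreal (W (x - y)) = ennreal (w (x - y))"
        using AEy2 by eventually_elim (metis e2ennreal_ereal)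
      then have e1: "(\<integral>\<^sup>+y. e2ennreal (W (x - y)) \<partial>\<mu>) = (\<integral>\<^sup>+y. ennreal (w (x - y)) \<partial>\<mu>)"
        by (rule nn_integral_cong_AE)
      have "AE y in \<mu>. e2ennreal (- W (x - y)) = ennreal (- w (x - y))"
        using AEy2 by eventually_elim (metis e2ennreal_ereal uminus_ereal.simps(1))
      then have e2: "(\<integral>\<^sup>+y. e2ennreal (- W (x - y)) \<partial>\<mu>) = (\<integral>\<^sup>+y. ennreal (- w (x - y)) \<partial>\<mu>)"
        by (rule nn_integral_cong_AE)
      have f1: "(\<integral>\<^sup>+y. ennreal (w (x - y)) \<partial>\<mu>) \<noteq> \<infinity>"
        and f2: "(\<integral>\<^sup>+y. ennreal (- w (x - y)) \<partial>\<mu>) \<noteq> \<infinity>"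
        using int unfolding real_integrable_def by auto
      have "conv W \<mu> x = ereal (enn2real (\<integral>\<^sup>+y. ennreal (w (x - y)) \<partial>\<mu>))
          - ereal (enn2real (\<integral>\<^sup>+y. ennreal (- w (x - y)) \<partial>\<mu>))"
        unfolding conv_def e1 e2 enn2ereal_fin[OF f1] enn2ereal_fin[OF f2] ..
      also have "\<dots> = ereal (Iw \<mu> x)"
        unfolding Iw_def real_lebesgue_integral_def[OF int] by simp
      finally show "conv W \<mu> x = ereal (Iw \<mu> x)" .
    qed
  qed
qed

lemma conv_meas:
  assumes mu: "torus_prob \<mu>"
  shows "conv W \<mu> \<in> borel_measurable borel"
proof -
  interpret prob_space \<mu> using torus_ps[OF mu] .
  have d: "(\<lambda>p. W (fst p - snd p)) \<in> borel_measurable (lborel \<Otimes>\<^sub>M \<mu>)"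
    by (rule measurable_compose[OF diff_meas[OF mu] W_meas])
  have m1: "(\<lambda>x. \<integral>\<^sup>+y. e2ennreal (W (x - y)) \<partial>\<mu>) \<in> borel_measurable lborel"
    using borel_measurable_nn_integral_fst[of "\<lambda>p. e2ennreal (W (fst p - snd p))" lborel] d
    by simp
  have m2: "(\<lambda>x. \<integral>\<^sup>+y. e2ennreal (- W (x - y)) \<partial>\<mu>) \<in> borel_measurable lborel"
    using borel_measurable_nn_integral_fst[of "\<lambda>p. e2ennreal (- W (fst p - snd p))" lborel] d
    by simp
  have "conv W \<mu> \<in> borel_measurable lborel"
    unfolding conv_def[abs_def] using m1 m2 by measurable
  then show ?thesis by simp
qed

definition Pc :: "real measure \<Rightarrow> real \<Rightarrow> real" where
  "Pc \<mu> x = real_of_ereal (conv W \<mu> x)"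

lemma Pc_AE:
  assumes mu: "torus_prob \<mu>"
  shows "AE x in lborel. 0 \<le> x \<and> x \<le> 1 \<longrightarrow> conv W \<mu> x = ereal (Pc \<mu> x) \<and> Pc \<mu> x = Iw \<mu> x"
  using conv_AE[OF mu] AE_lborel_singleton[of 1]
  by eventually_elim (auto simp: Pc_def)

lemma K_final:
  assumes mu: "torus_prob \<mu>" and cd: "0 \<le> c" "d \<le> 1"
  shows "set_integrable lborel {c..d} (Pc \<mu>)"
    and "(LINT x:{c..d}|lborel. Pc \<mu> x) = (\<integral>y. gI c d y \<partial>\<mu>)"
proof -
  have AE: "AE x in lborel. indicator {c..d} x *\<^sub>R Iw \<mu> x = indicator {c..d} x *\<^sub>R Pc \<mu> x"
    using Pc_AE[OF mu] by eventually_elim (use cd in \<open>auto simp: indicator_def\<close>)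
  have mP: "(\<lambda>x. indicator {c..d} x *\<^sub>R Pc \<mu> x) \<in> borel_measurable lborel"
    using conv_meas[OF mu] unfolding Pc_def by measurable
  have iI: "integrable lborel (\<lambda>x. indicator {c..d} x *\<^sub>R Iw \<mu> x)"
    using K_fubini(1)[OF mu cd] unfolding set_integrable_def .
  show "set_integrable lborel {c..d} (Pc \<mu>)"
    unfolding set_integrable_def by (rule integrable_cong_AE_imp[OF iI mP AE])
  have "(LINT x:{c..d}|lborel. Pc \<mu> x) = (LINT x:{c..d}|lborel. Iw \<mu> x)"
    unfolding set_lebesgue_integral_def
    by (rule integral_cong_AE[OF mP borel_measurable_integrable[OF iI]]) (use AE in \<open>auto elim: eventually_mono\<close>)
  then show "(LINT x:{c..d}|lborel. Pc \<mu> x) = (\<integral>y. gI c d y \<partial>\<mu>)"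
    using K_fubini(2)[OF mu cd] by simp
qed

end

lemma essinf_upper: "AE x in M. z \<le> f x \<Longrightarrow> z \<le> essinf M f"
  unfolding essinf_def by (rule Sup_upper) simp

lemma essinf_least: "(\<And>z. AE x in M. z \<le> f x \<Longrightarrow> z \<le> B) \<Longrightarrow> essinf M f \<le> B"
  unfolding essinf_def by (rule Sup_least) simp

lemma less_essinf_AE: "z < essinf M f \<Longrightarrow> AE x in M. z \<le> f x"
proof -
  assume "z < essinf M f"
  then obtain s where s: "AE x in M. s \<le> f x" "z < s"
    unfolding essinf_def by (auto simp: less_Sup_iff)
  from s(1) show ?thesis by eventually_elim (use s(2) in auto)
qed

lemma AE_leb_on: "(AE x in lebesgue_on {0..<1::real}. P x) \<longleftrightarrow> (AE x in lborel. 0 \<le> x \<and> x < 1 \<longrightarrow> P x)"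
proof -
  have "{0..<1::real} \<in> sets lborel" using atLeastLessThan_borel by simp
  then have "{0..<1::real} \<in> sets lebesgue" by (rule sets_completionI_sets)
  then show ?thesis by (subst AE_restrict_space_iff) (use \<open>{0..<1::real} \<in> sets lebesgue\<close> in \<open>auto simp: AE_completion_iff\<close>)
qed

lemma freq_lim_ge:
  fixes X :: "nat \<Rightarrow> real"
  assumes "X \<longlonglongrightarrow> L" "frequently (\<lambda>n. a \<le> X n) sequentially"
  shows "a \<le> L"
proof (rule ccontr)
  assume "\<not> a \<le> L"
  then have "eventually (\<lambda>n. X n < a) sequentially" using order_tendstoD(2)[OF assms(1)] by simp
  then have "\<not> frequently (\<lambda>n. a \<le> X n) sequentially"
    by (simp add: not_frequently) (auto elim: eventually_mono)
  with assms(2) show False by simp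
qed

lemma const_int_Icc:
  assumes "c \<le> d"
  shows "set_integrable lborel {c..d} (\<lambda>_. z::real)" "(LINT x:{c..d}|lborel. z) = z * (d - c)"
proof -
  have i: "integrable lborel (indicator {c..d} :: real \<Rightarrow> real)"
    by (rule integrable_real_indicator) (use assms in auto)
  show "set_integrable lborel {c..d} (\<lambda>_. z::real)" unfolding set_integrable_def
    using integrable_mult_left[OF i, of z] by (simp add: mult.commute)
  show "(LINT x:{c..d}|lborel. z) = z * (d - c)"
    unfolding set_lebesgue_integral_def using assms by (simp add: mult.commute)
qed

lemma lebesgue_diff_ge:
  fixes f :: "real \<Rightarrow> real"
  assumes f: "set_integrable lborel {0..1} f"
    and ge: "\<And>c d. 0 \<le> c \<Longrightarrow> c \<le> d \<Longrightarrow> d \<le> 1 \<Longrightarrow> z * (d - c) \<le> (LINT x:{c..d}|lborel. f x)"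
  shows "AE x in lborel. 0 \<le> x \<and> x < 1 \<longrightarrow> z \<le> f x"
proof -
  define g where "g x = indicator {0..1} x *\<^sub>R f x" for x
  have gi: "integrable lborel g" using f unfolding set_integrable_def g_def[abs_def] .
  have "g integrable_on UNIV" using has_integral_integral_lborel[OF gi] by blast
  then have gab: "\<And>a b. g integrable_on cbox a b" by (rule integrable_on_subcbox) simp
  obtain N where N: "negligible N"
    and Nd: "\<And>x e. \<lbrakk>x \<notin> N; 0 < e\<rbrakk> \<Longrightarrow>
      \<exists>d>0. \<forall>h. 0 < h \<and> h < d \<longrightarrow> norm (integral (cbox x (x + h *\<^sub>R One)) g /\<^sub>R h ^ DIM(real) - g x) < e"
    using integrable_ccontinuous_explicit[OF gab] by metis
  have "AE x in lebesgue. x \<notin> N"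
    using N by (simp add: negligible_iff_null_sets AE_not_in)
  then have AEN: "AE x in lborel. x \<notin> N" by (simp add: AE_completion_iff)
  then show ?thesis
  proof eventually_elim
    case (elim x)
    show ?case
    proof (rule impI, rule ccontr)
      assume x: "0 \<le> x \<and> x < 1" and nz: "\<not> z \<le> f x"
      then have "0 < z - f x" by simp
      from Nd[OF elim this] obtain d where dd1: "d > 0 \<and> (\<forall>h. 0 < h \<and> h < d \<longrightarrow> norm (integral (cbox x (x + h *\<^sub>R One)) g /\<^sub>R h ^ DIM(real) - g x) < z - f x)"
        by (rule exE)
      have d: "d > 0" using dd1 by (rule conjunct1)
      have dd0: "\<forall>h. 0 < h \<and> h < d \<longrightarrow> norm (integral (cbox x (x + h *\<^sub>R One)) g /\<^sub>R h ^ DIM(real) - g x) < z - f x"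
        using dd1 by (rule conjunct2)
      have dd: "\<bar>integral {x..x + h} g / h - g x\<bar> < z - f x" if "0 < h" "h < d" for h
      proof -
        have "norm (integral (cbox x (x + h *\<^sub>R One)) g /\<^sub>R h ^ DIM(real) - g x) < z - f x"
          using mp[OF spec[OF dd0, of h] conjI[OF that]] .
        moreover have "integral (cbox x (x + h *\<^sub>R One)) g /\<^sub>R h ^ DIM(real) = integral {x..x + h} g / h"
          by (simp add: cbox_interval divide_inverse_commute)
        ultimately show ?thesis by simp
      qed
      define m where "m = min d (1 - x)"
      define h where "h = m / 2"
      have m: "m \<le> 1 - x" "0 < m" "m \<le> d" using d x by (auto simp: m_def)
      have h1: "0 < h" unfolding h_def using m by linarith
      have h2: "h < d" unfolding h_def using m by linarith
      have h3: "x + h \<le> 1" unfolding h_def using m by linarith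
      note h = h1 h2 h3
      have "set_integrable lborel {x..x+h} f"
        by (rule set_integrable_subset[OF f]) (use x h in auto)
      then have "(LINT t:{x..x+h}|lborel. f t) = integral {x..x+h} f"
        by (rule set_borel_integral_eq_integral(2))
      also have "integral {x..x+h} f = integral {x..x+h} g"
        by (rule integral_cong) (use x h in \<open>auto simp: g_def\<close>)
      finally have eq: "(LINT t:{x..x+h}|lborel. f t) = integral {x..x+h} g" .
      have "z * h \<le> integral {x..x+h} g" using ge[of x "x + h"] x h eq by simp
      then have "z \<le> integral {x..x+h} g / h" using h by (simp add: field_simps)
      moreover have "g x = f x" using x by (simp add: g_def)
      ultimately show False using dd[OF h(1,2)] by simp
    qed
  qed
qed

context Wset begin

lemma int_ineq:
  assumes mu: "torus_prob \<mu>" and AE: "AE x in lebesgue_on {0..<1}. ereal z \<le> conv W \<mu> x"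
    and cd: "0 \<le> c" "c \<le> d" "d \<le> 1"
  shows "z * (d - c) \<le> (LINT x:{c..d}|lborel. Pc \<mu> x)"
proof -
  have AE2: "AE x in lborel. x \<in> {c..d} \<longrightarrow> z \<le> Pc \<mu> x"
    using AE[unfolded AE_leb_on] Pc_AE[OF mu] AE_lborel_singleton[of 1]
    by eventually_elim (use cd in auto)
  have "(LINT x:{c..d}|lborel. z) \<le> (LINT x:{c..d}|lborel. Pc \<mu> x)"
    by (rule set_integral_mono_AE[OF const_int_Icc(1)[OF cd(2)] K_final(1)[OF mu cd(1,3)] AE2])
  then show ?thesis using const_int_Icc(2)[OF cd(2)] by simp
qed

lemma essinf_nonpos:
  assumes mu: "torus_prob \<mu>"
  shows "essinf (lebesgue_on {0..<1}) (conv W \<mu>) \<le> 0"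
proof (rule essinf_least)
  fix z assume AE: "AE x in lebesgue_on {0..<1}. z \<le> conv W \<mu> x"
  show "z \<le> 0"
  proof (rule ccontr)
    assume "\<not> z \<le> 0"
    then have zpos: "0 < z" by simp
    define z' where "z' = real_of_ereal (min z 1)"
    have z': "0 < z'" "ereal z' \<le> z"
      using zpos by (cases z; auto simp: z'_def min_def)+
    have AE': "AE x in lebesgue_on {0..<1}. ereal z' \<le> conv W \<mu> x"
      using AE by eventually_elim (use z' in auto)
    have "z' * (1 - 0) \<le> (LINT x:{0..1}|lborel. Pc \<mu> x)"
      by (rule int_ineq[OF mu AE']) auto
    also have "\<dots> = (\<integral>y. gI 0 1 y \<partial>\<mu>)" by (rule K_final(2)[OF mu]) auto
    also have "\<dots> = (\<integral>y. 0 \<partial>\<mu>)"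
      by (rule Bochner_Integration.integral_cong[OF refl]) (use gI_mean torus_space[OF mu] in auto)
    finally show False using z' by simp
  qed
qed

lemma Hfun_nonneg: "torus_prob \<mu> \<Longrightarrow> 0 \<le> Hfun W \<mu>"
  using essinf_nonpos[of \<mu>] unfolding Hfun_def by (simp add: ereal_uminus_le_reorder)

lemma essinf_usc:
  assumes rho: "torus_prob \<rho>" and rhos: "\<And>n. torus_prob (\<rho>s n)" and wc: "weak_conv \<rho>s \<rho>"
  shows "limsup (\<lambda>n. essinf (lebesgue_on {0..<1}) (conv W (\<rho>s n))) \<le> essinf (lebesgue_on {0..<1}) (conv W \<rho>)"
  (is "limsup ?E \<le> ?e")
proof (subst Limsup_le_iff, intro allI impI)
  fix y assume "?e < y"
  then obtain z where z: "?e < ereal z" "ereal z < y" using ereal_dense2 by blast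
  show "eventually (\<lambda>n. y > ?E n) sequentially"
  proof (rule ccontr)
    assume "\<not> eventually (\<lambda>n. y > ?E n) sequentially"
    then have fr: "frequently (\<lambda>n. ereal z < ?E n) sequentially"
      unfolding not_eventually by (rule frequently_elim1) (use z in auto)
    have frAE: "frequently (\<lambda>n. AE x in lebesgue_on {0..<1}. ereal z \<le> conv W (\<rho>s n) x) sequentially"
      using fr by (rule frequently_elim1) (rule less_essinf_AE)
    have ge: "z * (d - c) \<le> (LINT x:{c..d}|lborel. Pc \<rho> x)"
      if cd: "0 \<le> c" "c \<le> d" "d \<le> 1" for c d
    proof -
      have lim: "(\<lambda>n. \<integral>y. gI c d y \<partial>(\<rho>s n)) \<longlonglongrightarrow> (\<integral>y. gI c d y \<partial>\<rho>)"
        using wc gI_cont[OF cd(2)] gI_per unfolding weak_conv_def by blast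
      have "frequently (\<lambda>n. z * (d - c) \<le> (\<integral>y. gI c d y \<partial>(\<rho>s n))) sequentially"
        using frAE
      proof (rule frequently_elim1)
        fix n assume "AE x in lebesgue_on {0..<1}. ereal z \<le> conv W (\<rho>s n) x"
        from int_ineq[OF rhos this cd] K_final(2)[OF rhos cd(1,3)]
        show "z * (d - c) \<le> (\<integral>y. gI c d y \<partial>(\<rho>s n))" by simp
      qed
      from freq_lim_ge[OF lim this] show ?thesis using K_final(2)[OF rho cd(1,3)] by simp
    qed
    have "AE x in lborel. 0 \<le> x \<and> x < 1 \<longrightarrow> z \<le> Pc \<rho> x"
      by (rule lebesgue_diff_ge[OF K_final(1)[OF rho] ge]) auto
    then have "AE x in lebesgue_on {0..<1}. ereal z \<le> conv W \<rho> x"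
      unfolding AE_leb_on using Pc_AE[OF rho] by eventually_elim auto
    then have "ereal z \<le> ?e" by (rule essinf_upper)
    with z show False by simp
  qed
qed

lemma Hfun_lsc:
  assumes rho: "torus_prob \<rho>" and rhos: "\<And>n. torus_prob (\<rho>s n)" and wc: "weak_conv \<rho>s \<rho>"
  shows "Hfun W \<rho> \<le> liminf (\<lambda>n. Hfun W (\<rho>s n))"
  unfolding Hfun_def ereal_Liminf_uminus
  using essinf_usc[OF rho rhos wc] by simp

end

lemma G_lsc:
  fixes H :: ereal and Hn :: "nat \<Rightarrow> ereal" and D :: real and Dn :: "nat \<Rightarrow> real"
  assumes alpha: "\<alpha> > 0" and H0: "0 \<le> H" and Hn0: "\<And>n. 0 \<le> Hn n"
    and Hle: "H \<le> liminf Hn" and D0: "0 \<le> D" and Dn0: "\<And>n. 0 \<le> Dn n"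
    and lim: "Dn \<longlonglongrightarrow> D"
  shows "H / ereal (D powr \<alpha>) \<le> liminf (\<lambda>n. Hn n / ereal (Dn n powr \<alpha>))"
proof (cases "D = 0")
  case False
  then have Dp: "D > 0" using D0 by simp
  define q where "q = D powr \<alpha>"
  have qp: "q > 0" using Dp by (simp add: q_def)
  have qlim: "(\<lambda>n. Dn n powr \<alpha>) \<longlonglongrightarrow> q"
    unfolding q_def by (rule tendsto_powr[OF lim tendsto_const]) (use Dp in simp)
  have ev: "eventually (\<lambda>n. Dn n powr \<alpha> > 0) sequentially"
    using order_tendstoD(1)[OF qlim qp] .
  have ulim: "(\<lambda>n. ereal (inverse (Dn n powr \<alpha>))) \<longlonglongrightarrow> ereal (inverse q)"
    by (intro tendsto_intros qlim) (use qp in simp)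
  have "liminf (\<lambda>n. Hn n / ereal (Dn n powr \<alpha>)) = liminf (\<lambda>n. ereal (inverse (Dn n powr \<alpha>)) * Hn n)"
    by (rule Liminf_eq) (use ev in \<open>eventually_elim, simp add: divide_ereal_def mult.commute\<close>)
  also have "\<dots> = ereal (inverse q) * liminf Hn"
    by (rule ereal_liminf_lim_mult[OF ulim]) (use qp in auto)
  finally have eq: "liminf (\<lambda>n. Hn n / ereal (Dn n powr \<alpha>)) = ereal (inverse q) * liminf Hn" .
  have "H / ereal (D powr \<alpha>) = ereal (inverse q) * H"
    using qp by (simp add: q_def divide_ereal_def mult.commute)
  also have "\<dots> \<le> ereal (inverse q) * liminf Hn"
    by (rule ereal_mult_left_mono[OF Hle]) (use qp in simp)
  finally show ?thesis using eq by simp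
next
  case True
  have Gn0: "0 \<le> Hn n / ereal (Dn n powr \<alpha>)" for n
    unfolding divide_ereal_def
    using ereal_mult_right_mono[OF Hn0[of n] inverse_ereal_ge0I[of "ereal (Dn n powr \<alpha>)"]] by simp
  show ?thesis
  proof (cases "H = 0")
    case True
    with \<open>D = 0\<close> have "H / ereal (D powr \<alpha>) = 0" by (simp add: divide_ereal_def)
    also have "0 \<le> liminf (\<lambda>n. Hn n / ereal (Dn n powr \<alpha>))"
      by (rule Liminf_bounded) (simp add: Gn0)
    finally show ?thesis .
  next
    case False
    then have Hp: "0 < H" using H0 by simp
    then obtain h0 where h0: "0 < ereal h0" "ereal h0 < H" using ereal_dense2 by blast
    have h0p: "0 < h0" using h0 by simp
    have evH: "eventually (\<lambda>n. ereal h0 < Hn n) sequentially"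
      using h0(2) Hle by (intro less_LiminfD) simp
    have qlim: "(\<lambda>n. Dn n powr \<alpha>) \<longlonglongrightarrow> 0"
      by (rule tendsto_zero_powrI[OF _ tendsto_const]) (use lim True Dn0 alpha in auto)
    have "liminf (\<lambda>n. Hn n / ereal (Dn n powr \<alpha>)) = \<infinity>"
    proof (rule ereal_top)
      fix B :: real
      define B' where "B' = max B 1"
      have B': "0 < B'" "B \<le> B'" by (auto simp: B'_def)
      have evq: "eventually (\<lambda>n. Dn n powr \<alpha> < h0 / B') sequentially"
        using order_tendstoD(2)[OF qlim] B' h0p by simp
      have "eventually (\<lambda>n. ereal B \<le> Hn n / ereal (Dn n powr \<alpha>)) sequentially"
        using evH evq
      proof eventually_elim
        case (elim n)
        show ?case
        proof (cases "Dn n powr \<alpha> = 0")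
          case True
          then show ?thesis using elim(1) h0p
            by (cases "Hn n") (auto simp: divide_ereal_def)
        next
          case False
          then have qn: "0 < Dn n powr \<alpha>" using Dn0[of n] by simp
          have "B' < h0 / Dn n powr \<alpha>" using elim(2) qn B' by (simp add: field_simps)
          then have "ereal B \<le> ereal h0 * ereal (inverse (Dn n powr \<alpha>))"
            using B' by (simp add: field_simps)
          also have "\<dots> \<le> Hn n * ereal (inverse (Dn n powr \<alpha>))"
            by (rule ereal_mult_right_mono) (use elim(1) qn in auto)
          finally show ?thesis using qn by (simp add: divide_ereal_def)
        qed
      qed
      then show "ereal B \<le> liminf (\<lambda>n. Hn n / ereal (Dn n powr \<alpha>))"
        by (rule Liminf_bounded)
    qed
    then show ?thesis by simp
  qed
qed

theorem lemma3p2: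
  fixes W :: "real \<Rightarrow> ereal" and w' w'' :: "real \<Rightarrow> real" and C1 \<alpha> :: real
    and \<rho> :: "real measure"
  defines "w \<equiv> (\<lambda>x. real_of_ereal (W x))"
  assumes periodic: "\<forall>x. W (x + 1) = W x"
    and finite_off0: "\<forall>x. x \<notin> \<int> \<longrightarrow> \<bar>W x\<bar> \<noteq> \<infinity>"
    and H1_L1: "set_integrable lborel {0..1} w"
    and H1_mean: "(\<integral>x\<in>{0..1}. w x \<partial>lborel) = 0"
    and H1_C2: "\<forall>x. x \<notin> \<int> \<longrightarrow> (w has_real_derivative w' x) (at x) \<and> (w' has_real_derivative w'' x) (at x)"
    and H1_C2_cont: "continuous_on (- \<int>) w''"
    and H2: "\<forall>x. W (- x) = W x"
    and H3: "(W \<longlongrightarrow> \<infinity>) (at 0)" "W 0 = \<infinity>"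
    and H4: "C1 > 0" "\<forall>x. x \<notin> \<int> \<longrightarrow> w'' x \<ge> C1"
    and alpha: "\<alpha> > 0"
    and rho: "torus_prob \<rho>"
  shows "(\<exists>a l. 0 \<le> l \<and> l \<le> 1 \<and> discr \<rho> = measure \<rho> (arc a l) - l)
       \<and> (\<forall>\<rho>s. (\<forall>n. torus_prob (\<rho>s n)) \<and> weak_conv \<rho>s \<rho> \<longrightarrow>
              ((\<lambda>n. discr (\<rho>s n)) \<longlonglongrightarrow> discr \<rho>)
            \<and> Hfun W \<rho> \<le> liminf (\<lambda>n. Hfun W (\<rho>s n))
            \<and> Gfun W \<alpha> \<rho> \<le> liminf (\<lambda>n. Gfun W \<alpha> (\<rho>s n)))"
proof -
  interpret Wset W
  proof
    show "\<forall>x. W (x + 1) = W x" by (rule periodic)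
    show "\<forall>x. x \<notin> \<int> \<longrightarrow> \<bar>W x\<bar> \<noteq> \<infinity>" by (rule finite_off0)
    show "set_integrable lborel {0..1} (\<lambda>x. real_of_ereal (W x))" using H1_L1 by (simp add: w_def)
    show "(\<integral>x\<in>{0..1}. real_of_ereal (W x) \<partial>lborel) = 0" using H1_mean by (simp add: w_def)
    show "W 0 = \<infinity>" by (rule H3(2))
  qed
  have part1: "\<exists>a l. 0 \<le> l \<and> l \<le> 1 \<and> discr \<rho> = measure \<rho> (arc a l) - l"
    by (rule discr_attained[OF rho])
  have part2: "((\<lambda>n. discr (\<rho>s n)) \<longlonglongrightarrow> discr \<rho>)
            \<and> Hfun W \<rho> \<le> liminf (\<lambda>n. Hfun W (\<rho>s n))
            \<and> Gfun W \<alpha> \<rho> \<le> liminf (\<lambda>n. Gfun W \<alpha> (\<rho>s n))"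
    if rs: "(\<forall>n. torus_prob (\<rho>s n)) \<and> weak_conv \<rho>s \<rho>" for \<rho>s
  proof -
    have rhos: "\<And>n. torus_prob (\<rho>s n)" and wc: "weak_conv \<rho>s \<rho>" using rs by auto
    have D: "(\<lambda>n. discr (\<rho>s n)) \<longlonglongrightarrow> discr \<rho>" by (rule discr_tendsto[OF rho rhos wc])
    have H: "Hfun W \<rho> \<le> liminf (\<lambda>n. Hfun W (\<rho>s n))" by (rule Hfun_lsc[OF rho rhos wc])
    have G: "Gfun W \<alpha> \<rho> \<le> liminf (\<lambda>n. Gfun W \<alpha> (\<rho>s n))"
      unfolding Gfun_def
      by (rule G_lsc[OF alpha Hfun_nonneg[OF rho] Hfun_nonneg[OF rhos] H discr_nonneg[OF rho] discr_nonneg[OF rhos] D])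
    show ?thesis using D H G by blast
  qed
  show ?thesis using part1 part2 by blast
qed

end
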